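(* Assume $S\times M\neq\emptyset$, let $(x,\lambda):[t_0,+\infty[\ \to X\times Y$ be a solution of (AHT), suppose there exists $t_+\ge t_0$ such that $\varepsilon^2(t)+\dot\varepsilon(t)\ge0$ and $2\varepsilon(t)\dot\varepsilon(t)+\ddot\varepsilon(t)\le0$ for all $t\ge t_+$, and suppose there exists $\alpha>0$ with $\|T(x,\lambda)-T(\xi,\eta)\|^2\ge\alpha\|(x,\lambda)-(\xi,\eta)\|^2$ for all $(x,\lambda),(\xi,\eta)\in X\times Y$. Then for $(\bar x,\bar\lambda)\in S\times M$, \[ \|(x(t),\lambda(t))-(\bar x,\bar\lambda)\|^2=\mathcal{O}\big(e^{-2\rho(t)}+\varepsilon^2(t)\big)\quad\text{as } t\to+\infty. \]
   Context: $X,Y$ are real Hilbert spaces; $X\times Y$ carries the product inner product and norm $\|\cdot\|$. Standing assumptions: $f:X\to\mathbb{R}$ is convex and continuously differentiable with $\nabla f$ Lipschitz continuous on bounded subsets of $X$; $A:X\to Y$ is linear and continuous with adjoint $A^*$; $b\in Y$; $\varepsilon:[t_0,+\infty[\ \to\ ]0,+\infty[$ ($t_0\ge0$) is twice continuously differentiable with $\lim_{t\to+\infty}\varepsilon(t)=0$. $L(x,\lambda)=f(x)+\langle\lambda,Ax-b\rangle_Y$ and $T(x,\lambda)=(\nabla f(x)+A^*\lambda,\ b-Ax)$. $S$ is the set of optimal solutions of $\min\{f(x):Ax=b\}$, $M$ the set of Lagrange multipliers; $S\times M$ is the set of saddle points of $L$, equal to the zero set of $T$. $\rho(t)=\int_{t_0}^t\varepsilon(\tau)\,d\tau$.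 (AHT) is the system $\dot x+\nabla f(x)+A^*\lambda+\varepsilon(t)x=0$, $\dot\lambda+b-Ax+\varepsilon(t)\lambda=0$; a solution is a continuously differentiable $(x,\lambda):[t_0,+\infty[\ \to X\times Y$ satisfying it on $[t_0,+\infty[$ (existence and uniqueness for every initial datum is assumed). *)

theory Defs
  imports "HOL-Analysis.Analysis" "HOL-Library.Landau_Symbols"
begin

definition opt_set :: "('x \<Rightarrow> real) \<Rightarrow> ('x \<Rightarrow> 'y) \<Rightarrow> 'y \<Rightarrow> 'x set" where
  "opt_set f A b = {x. A x = b \<and> (\<forall>z. A z = b \<longrightarrow> f x \<le> f z)}"

definition mult_set :: "('x::real_vector \<Rightarrow> real) \<Rightarrow> ('x \<Rightarrow> 'x) \<Rightarrow> ('x \<Rightarrow> 'y) \<Rightarrow> ('y \<Rightarrow> 'x) \<Rightarrow> 'y \<Rightarrow> 'y set" where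
  "mult_set f gradf A Astar b = {lam. \<exists>xb\<in>opt_set f A b. gradf xb + Astar lam = 0}"

definition Top :: "('x::real_vector \<Rightarrow> 'x) \<Rightarrow> ('x \<Rightarrow> 'y::real_vector) \<Rightarrow> ('y \<Rightarrow> 'x) \<Rightarrow> 'y \<Rightarrow> 'x \<times> 'y \<Rightarrow> 'x \<times> 'y" where
  "Top gradf A Astar b z = (gradf (fst z) + Astar (snd z), b - A (fst z))"

end

theory Submission
  imports Defs
begin

definition updini :: "(real \<Rightarrow> real) \<Rightarrow> real \<Rightarrow> real \<Rightarrow> bool" where
  "updini f t D \<longleftrightarrow> (\<exists>\<psi>. (\<psi> \<longlongrightarrow> D) (at_right 0) \<and>
      eventually (\<lambda>h. f (t + h) - f t \<le> h * \<psi> h) (at_right 0))"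

lemma updini_deriv:
  assumes "(f has_real_derivative D) (at t within S)" "c > 0" "{t..t+c} \<subseteq> S"
  shows "updini f t D"
proof -
  have lim: "filterlim (\<lambda>h. t + h) (at t within S) (at_right 0)"
  proof (subst filterlim_at, intro conjI)
    show "\<forall>\<^sub>F x in at_right 0. t + x \<in> S \<and> t + x \<noteq> t"
      using eventually_at_right_real[OF assms(2)] by eventually_elim (use assms(3) in auto)
    show "((\<lambda>h. t + h) \<longlongrightarrow> t) (at_right 0)"
      by (rule tendsto_eq_intros | simp)+
  qed
  have "((\<lambda>y. (f y - f t) / (y - t)) \<longlongrightarrow> D) (at t within S)"
    using assms(1) by (simp add: has_field_derivative_iff)
  from filterlim_compose[OF this lim]
  have "((\<lambda>h. (f (t+h) - f t) / h) \<longlongrightarrow> D) (at_right 0)" by simp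
  moreover have "eventually (\<lambda>h. f (t + h) - f t \<le> h * ((f (t+h) - f t) / h)) (at_right 0)"
    using eventually_at_right_real[OF assms(2)] by eventually_elim auto
  ultimately show ?thesis unfolding updini_def by blast
qed

lemma updini_mono:
  assumes "updini f t D" "D \<le> D'" shows "updini f t D'"
proof -
  obtain \<psi> where p: "(\<psi> \<longlongrightarrow> D) (at_right 0)" "eventually (\<lambda>h. f (t + h) - f t \<le> h * \<psi> h) (at_right 0)"
    using assms(1) unfolding updini_def by blast
  have "((\<lambda>h. \<psi> h + (D' - D)) \<longlongrightarrow> D + (D' - D)) (at_right 0)"
    by (intro tendsto_intros p)
  moreover have "eventually (\<lambda>h. f (t + h) - f t \<le> h * (\<psi> h + (D' - D))) (at_right 0)"
    using p(2) eventually_at_right_less[of 0] 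
  proof eventually_elim
    case (elim h) then show ?case using assms(2) by (smt (verit) distrib_left mult_nonneg_nonneg)
  qed
  ultimately show ?thesis unfolding updini_def by auto
qed

lemma updini_add:
  assumes "updini f t D" "updini g t E" shows "updini (\<lambda>s. f s + g s) t (D + E)"
proof -
  obtain \<psi> where p: "(\<psi> \<longlongrightarrow> D) (at_right 0)" "eventually (\<lambda>h. f (t + h) - f t \<le> h * \<psi> h) (at_right 0)"
    using assms(1) unfolding updini_def by blast
  obtain \<phi> where q: "(\<phi> \<longlongrightarrow> E) (at_right 0)" "eventually (\<lambda>h. g (t + h) - g t \<le> h * \<phi> h) (at_right 0)"
    using assms(2) unfolding updini_def by blast
  have "((\<lambda>h. \<psi> h + \<phi> h) \<longlongrightarrow> D + E) (at_right 0)" by (intro tendsto_intros p q)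
  moreover have "eventually (\<lambda>h. (f (t+h) + g (t+h)) - (f t + g t) \<le> h * (\<psi> h + \<phi> h)) (at_right 0)"
    using p(2) q(2) by eventually_elim (simp add: distrib_left)
  ultimately show ?thesis unfolding updini_def by auto
qed

lemma updini_mult:
  assumes "updini g t G" "(e has_real_derivative E) (at t within S)" "c > 0" "{t..t+c} \<subseteq> S"
    "eventually (\<lambda>h. e (t + h) \<ge> 0) (at_right 0)"
  shows "updini (\<lambda>s. e s * g s) t (e t * G + E * g t)"
proof -
  obtain \<psi> where p: "(\<psi> \<longlongrightarrow> G) (at_right 0)" "eventually (\<lambda>h. g (t + h) - g t \<le> h * \<psi> h) (at_right 0)"
    using assms(1) unfolding updini_def by blast
  have lim: "filterlim (\<lambda>h. t + h) (at t within S) (at_right 0)"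
  proof (subst filterlim_at, intro conjI)
    show "\<forall>\<^sub>F x in at_right 0. t + x \<in> S \<and> t + x \<noteq> t"
      using eventually_at_right_real[OF assms(3)] by eventually_elim (use assms(4) in auto)
    show "((\<lambda>h. t + h) \<longlongrightarrow> t) (at_right 0)"
      by (rule tendsto_eq_intros | simp)+
  qed
  have "((\<lambda>y. (e y - e t) / (y - t)) \<longlongrightarrow> E) (at t within S)"
    using assms(2) by (simp add: has_field_derivative_iff)
  from filterlim_compose[OF this lim]
  have d: "((\<lambda>h. (e (t+h) - e t) / h) \<longlongrightarrow> E) (at_right 0)" by simp
  have "continuous (at t within S) e"
    using assms(2) by (rule DERIV_continuous)
  hence "(e \<longlongrightarrow> e t) (at t within S)" by (simp add: continuous_within)
  from filterlim_compose[OF this lim]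
  have c: "((\<lambda>h. e (t+h)) \<longlongrightarrow> e t) (at_right 0)" by simp
  have "((\<lambda>h. e (t+h) * \<psi> h + (e (t+h) - e t) / h * g t) \<longlongrightarrow> e t * G + E * g t) (at_right 0)"
    by (intro tendsto_intros c d p)
  moreover have "eventually (\<lambda>h. e (t+h) * g (t+h) - e t * g t \<le> h * (e (t+h) * \<psi> h + (e (t+h) - e t) / h * g t)) (at_right 0)"
    using p(2) assms(5) eventually_at_right_less[of 0]
  proof eventually_elim
    case (elim h)
    have "e (t+h) * (g (t + h) - g t) \<le> e (t+h) * (h * \<psi> h)"
      using elim by (intro mult_left_mono) auto
    moreover have "h * ((e (t+h) - e t) / h * g t) = (e (t+h) - e t) * g t" using elim by simp
    ultimately show ?case using elim by (simp add: algebra_simps)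
  qed
  ultimately show ?thesis unfolding updini_def by auto
qed

lemma dini_decreasing:
  fixes f :: "real \<Rightarrow> real"
  assumes "a \<le> b" "continuous_on {a..b} f" "\<And>t. t \<in> {a..<b} \<Longrightarrow> \<exists>D\<le>0. updini f t D"
  shows "f b \<le> f a"
proof -
  have key: "f b \<le> f a + e * (b - a)" if e: "e > 0" for e
  proof -
    define S where "S = {u\<in>{a..b}. f u \<le> f a + e * (u - a)}"
    have "closed S"
    proof -
      have "continuous_on {a..b} (\<lambda>u. f u - (f a + e * (u - a)))"
        by (intro continuous_intros assms(2))
      then have "closed ({a..b} \<inter> (\<lambda>u. f u - (f a + e * (u - a))) -` {..0})"
        by (intro continuous_closed_preimage) auto
      moreover have "{a..b} \<inter> (\<lambda>u. f u - (f a + e * (u - a))) -` {..0} = S" unfolding S_def by auto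
      ultimately show ?thesis by simp
    qed
    have "a \<in> S" using assms(1) by (simp add: S_def)
    have bdd: "bdd_above S" unfolding S_def by (rule bdd_aboveI[of _ b]) auto
    define s where "s = Sup S"
    have sS: "s \<in> S" unfolding s_def using \<open>closed S\<close> \<open>a \<in> S\<close> bdd
      by (intro closed_contains_Sup) auto
    have "s = b"
    proof (rule ccontr)
      assume "s \<noteq> b"
      with sS have sb: "s < b" "a \<le> s" by (auto simp: S_def)
      obtain D where D: "D \<le> 0" "updini f s D" using assms(3)[of s] sb by auto
      obtain \<psi> where p: "(\<psi> \<longlongrightarrow> D) (at_right 0)" "eventually (\<lambda>h. f (s + h) - f s \<le> h * \<psi> h) (at_right 0)"
        using D(2) unfolding updini_def by blast
      have "eventually (\<lambda>h. \<psi> h < e) (at_right 0)"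
        using order_tendstoD(2)[OF p(1), of e] e D(1) by auto
      moreover have "eventually (\<lambda>h. 0 < h \<and> h < b - s) (at_right 0)"
        using eventually_at_right_real[of 0 "b - s"] sb by auto
      ultimately have "eventually (\<lambda>h. f (s + h) - f s \<le> h * \<psi> h \<and> \<psi> h < e \<and> 0 < h \<and> h < b - s) (at_right 0)"
        using p(2) by eventually_elim auto
      then obtain h where h: "f (s + h) - f s \<le> h * \<psi> h" "\<psi> h < e" "0 < h" "h < b - s"
        using eventually_happens[OF _ ] trivial_limit_at_right_real by (metis (mono_tags, lifting) eventually_happens')
      have "h * \<psi> h \<le> h * e" using h by (intro mult_left_mono) auto
      moreover have "f s \<le> f a + e * (s - a)" using sS by (simp add: S_def)
      ultimately have "f (s + h) \<le> f a + e * ((s + h) - a)" using h(1) by (simp add: algebra_simps)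
      then have "s + h \<in> S" using h sS sb unfolding S_def by auto
      then have "s + h \<le> s" unfolding s_def using bdd by (rule cSup_upper)
      then show False using h by simp
    qed
    then show ?thesis using sS by (simp add: S_def)
  qed
  show ?thesis
  proof (rule ccontr)
    assume "\<not> f b \<le> f a"
    then have gt: "f b - f a > 0" by simp
    show False
    proof (cases "b = a")
      case True then show False using gt by simp
    next
      case False
      then have "b - a > 0" using assms(1) by simp
      define e where "e = (f b - f a) / (2 * (b - a))"
      have "e > 0" using gt \<open>b - a > 0\<close> by (simp add: e_def)
      have "e * (b - a) = (f b - f a) / 2" using \<open>b - a > 0\<close> by (simp add: e_def field_simps)
      then show False using key[OF \<open>e > 0\<close>] gt by simp
    qed
  qed
qed

lemma convex_tangent:
  fixes f :: "'x::real_inner \<Rightarrow> real"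
  assumes cv: "convex_on UNIV f" and d: "(f has_derivative (\<lambda>h. inner gu h)) (at u)"
  shows "f u + inner gu (w - u) \<le> f w"
proof -
  have d1: "((\<lambda>s. f (u + s *\<^sub>R (w - u))) has_derivative (\<lambda>s. inner gu (s *\<^sub>R (w - u)))) (at 0)"
  proof -
    have "((\<lambda>s::real. u + s *\<^sub>R (w - u)) has_derivative (\<lambda>s. s *\<^sub>R (w - u))) (at 0)"
      by (auto intro!: derivative_eq_intros)
    moreover have "(f has_derivative (\<lambda>h. inner gu h)) (at (u + 0 *\<^sub>R (w - u)))" using d by simp
    ultimately show ?thesis by (rule has_derivative_compose[where g = f, unfolded o_def])
  qed
  have "((\<lambda>s. f (u + s *\<^sub>R (w - u))) has_real_derivative inner gu (w - u)) (at 0)"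
  proof -
    have eq: "(\<lambda>s. inner gu (s *\<^sub>R (w-u))) = (*) (inner gu (w-u))" by (rule ext) simp
    show ?thesis using d1 unfolding has_field_derivative_def eq .
  qed
  then have "((\<lambda>s. (f (u + s *\<^sub>R (w - u)) - f (u + 0 *\<^sub>R (w - u))) / (s - 0)) \<longlongrightarrow> inner gu (w - u)) (at 0)"
    by (simp add: has_field_derivative_iff)
  then have lim: "((\<lambda>s. (f (u + s *\<^sub>R (w - u)) - f u) / s) \<longlongrightarrow> inner gu (w - u)) (at_right 0)"
    using tendsto_mono[OF at_le[of "{0<..}" UNIV]] by auto
  have ev: "eventually (\<lambda>s. (f (u + s *\<^sub>R (w - u)) - f u) / s \<le> f w - f u) (at_right 0)"
    using eventually_at_right_real[OF zero_less_one]
  proof eventually_elim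
    case (elim s)
    then have s: "0 < s" "s < 1" by auto
    have "u + s *\<^sub>R (w - u) = (1 - s) *\<^sub>R u + s *\<^sub>R w" by (simp add: algebra_simps)
    then have "f (u + s *\<^sub>R (w - u)) \<le> (1 - s) * f u + s * f w"
      using convex_onD[OF cv, of s u w] s by simp
    then have "f (u + s *\<^sub>R (w - u)) - f u \<le> s * (f w - f u)" by (simp add: algebra_simps)
    then show ?case using s by (simp add: divide_simps mult.commute)
  qed
  have "inner gu (w - u) \<le> f w - f u"
    by (rule tendsto_upperbound[OF lim ev]) simp
  then show ?thesis by simp
qed

lemma convex_grad_mono:
  fixes f :: "'x::real_inner \<Rightarrow> real"
  assumes cv: "convex_on UNIV f" and d: "\<And>u. (f has_derivative (\<lambda>h. inner (g u) h)) (at u)"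
  shows "inner (g u - g w) (u - w) \<ge> 0"
proof -
  have "f u + inner (g u) (w - u) \<le> f w" by (rule convex_tangent[OF cv d])
  moreover have "f w + inner (g w) (u - w) \<le> f u" by (rule convex_tangent[OF cv d])
  moreover have "inner (g u - g w) (u - w) = - inner (g u) (w - u) - inner (g w) (u - w)"
    by (simp add: inner_diff_left inner_diff_right)
  ultimately show ?thesis by linarith
qed

lemma adj_lip:
  fixes A :: "'x::real_inner \<Rightarrow> 'y::real_inner"
  assumes "bounded_linear A" "\<And>u v. inner (Astar v) u = inner v (A u)"
  obtains K where "K > 0" "\<And>v w. norm (Astar v - Astar w) \<le> K * norm (v - w)"
proof -
  obtain K where K: "K > 0" "\<And>x. norm (A x) \<le> norm x * K"
    using bounded_linear.pos_bounded[OF assms(1)] by blast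
  have "norm (Astar v - Astar w) \<le> K * norm (v - w)" for v w
  proof -
    define q where "q = Astar v - Astar w"
    have "(norm q)\<^sup>2 = inner q q" by (simp add: power2_norm_eq_inner)
    also have "\<dots> = inner (Astar v) q - inner (Astar w) q" unfolding q_def by (rule inner_diff_left)
    also have "\<dots> = inner v (A q) - inner w (A q)" by (simp only: assms(2))
    also have "\<dots> = inner (v - w) (A q)" by (simp only: inner_diff_left)
    also have "\<dots> \<le> norm (v - w) * norm (A q)" by (rule norm_cauchy_schwarz)
    also have "\<dots> \<le> norm (v - w) * (norm q * K)" by (intro mult_left_mono K(2)) auto
    finally have "norm q * norm q \<le> (K * norm (v - w)) * norm q" by (simp only: power2_eq_square ac_simps)
    then have "norm q \<le> K * norm (v - w)"
    proof (cases "norm q = 0")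
      case True then show ?thesis using K(1) by simp
    next
      case False then have "norm q > 0" by simp
      then show ?thesis using mult_right_le_imp_le[OF \<open>norm q * norm q \<le> (K * norm (v - w)) * norm q\<close>] by blast
    qed
    then show ?thesis by (simp only: q_def)
  qed
  then show ?thesis using K(1) that by blast
qed

lemma filterlim_shift:
  assumes "c > 0" "{t..t+c} \<subseteq> S"
  shows "filterlim (\<lambda>h. t + h) (at t within S) (at_right (0::real))"
proof (subst filterlim_at, intro conjI)
  show "\<forall>\<^sub>F x in at_right 0. t + x \<in> S \<and> t + x \<noteq> t"
    using eventually_at_right_real[OF assms(1)] by eventually_elim (use assms(2) in auto)
  show "((\<lambda>h. t + h) \<longlongrightarrow> t) (at_right 0)"
    by (rule tendsto_eq_intros | simp)+
qed

lemma vd_quot: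
  fixes f :: "real \<Rightarrow> 'a::real_normed_vector"
  assumes "(f has_vector_derivative D) (at t within S)" "c > 0" "{t..t+c} \<subseteq> S"
  shows "((\<lambda>h. (f (t+h) - f t) /\<^sub>R h) \<longlongrightarrow> D) (at_right 0)"
proof -
  have "((\<lambda>y. ((f y - f t) - (y - t) *\<^sub>R D) /\<^sub>R norm (y - t)) \<longlongrightarrow> 0) (at t within S)"
    using assms(1) unfolding has_vector_derivative_def has_derivative_at_within by blast
  from filterlim_compose[OF this filterlim_shift[OF assms(2,3)]]
  have "((\<lambda>h. ((f (t+h) - f t) - h *\<^sub>R D) /\<^sub>R norm h) \<longlongrightarrow> 0) (at_right 0)" by simp
  then have "((\<lambda>h. ((f (t+h) - f t) - h *\<^sub>R D) /\<^sub>R norm h + D) \<longlongrightarrow> D) (at_right 0)"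
    using tendsto_add[OF _ tendsto_const[of D]] by fastforce
  then show ?thesis
  proof (rule Lim_transform_eventually)
    show "\<forall>\<^sub>F h in at_right 0. ((f (t+h) - f t) - h *\<^sub>R D) /\<^sub>R norm h + D = (f (t+h) - f t) /\<^sub>R h"
      using eventually_at_right_less[of 0]
    proof eventually_elim
      case (elim h)
      then show ?case by (simp add: scaleR_diff_right)
    qed
  qed
qed

lemma key_dini:
  fixes z v :: "real \<Rightarrow> 'a::real_inner" and T :: "'a \<Rightarrow> 'a" and ep :: "real \<Rightarrow> real"
  assumes mono: "\<And>p q. inner (T p - T q) (p - q) \<ge> 0"
    and lip: "\<And>p q. p \<in> ball (z t) \<delta> \<Longrightarrow> q \<in> ball (z t) \<delta> \<Longrightarrow> norm (T p - T q) \<le> L * norm (p - q)"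
    and dpos: "\<delta> > 0"
    and zd: "(z has_vector_derivative v t) (at t within S)"
    and c: "c > 0" "{t..t+c} \<subseteq> S"
    and vdef: "\<And>s. s \<in> S \<Longrightarrow> v s = - (T (z s) + ep s *\<^sub>R z s)"
    and epd: "(ep has_real_derivative ep') (at t within S)"
    and vc: "continuous (at t within S) v"
  shows "updini (\<lambda>s. (norm (v s))\<^sup>2) t (- 2 * ep t * (norm (v t))\<^sup>2 - 2 * ep' * inner (z t) (v t))"
proof -
  have lim: "filterlim (\<lambda>h. t + h) (at t within S) (at_right 0)" by (rule filterlim_shift[OF c])
  have q1: "((\<lambda>h. (z (t+h) - z t) /\<^sub>R h) \<longlongrightarrow> v t) (at_right 0)" by (rule vd_quot[OF zd c])
  have "((\<lambda>s. ep s *\<^sub>R z s) has_vector_derivative (ep t *\<^sub>R v t + ep' *\<^sub>R z t)) (at t within S)"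
    by (rule has_vector_derivative_scaleR[OF epd zd])
  from vd_quot[OF this c]
  have q2: "((\<lambda>h. (ep (t+h) *\<^sub>R z (t+h) - ep t *\<^sub>R z t) /\<^sub>R h) \<longlongrightarrow> ep t *\<^sub>R v t + ep' *\<^sub>R z t) (at_right 0)" .
  have "(v \<longlongrightarrow> v t) (at t within S)" using vc by (simp add: continuous_within)
  from filterlim_compose[OF this lim] have vc': "((\<lambda>h. v (t+h)) \<longlongrightarrow> v t) (at_right 0)" by simp
  have "(z \<longlongrightarrow> z t) (at t within S)" using has_vector_derivative_continuous[OF zd] by (simp add: continuous_within)
  from filterlim_compose[OF this lim] have zc': "((\<lambda>h. z (t+h)) \<longlongrightarrow> z t) (at_right 0)" by simp
  have zball: "eventually (\<lambda>h. z (t+h) \<in> ball (z t) \<delta>) (at_right 0)"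
    using tendstoD[OF zc' dpos] by eventually_elim (simp add: dist_commute)
  define W where "W h = v (t+h) + v t" for h
  define \<psi> where "\<psi> h = L * (norm ((z (t+h) - z t) /\<^sub>R h)) * norm (W h - 2 *\<^sub>R ((z (t+h) - z t) /\<^sub>R h))
      - inner ((ep (t+h) *\<^sub>R z (t+h) - ep t *\<^sub>R z t) /\<^sub>R h) (W h)" for h
  have "((\<lambda>h. L * (norm ((z (t+h) - z t) /\<^sub>R h)) * norm (W h - 2 *\<^sub>R ((z (t+h) - z t) /\<^sub>R h))
      - inner ((ep (t+h) *\<^sub>R z (t+h) - ep t *\<^sub>R z t) /\<^sub>R h) (W h)) \<longlongrightarrow>
      L * norm (v t) * norm ((v t + v t) - 2 *\<^sub>R v t) - inner (ep t *\<^sub>R v t + ep' *\<^sub>R z t) (v t + v t)) (at_right 0)"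
    unfolding W_def by (intro tendsto_intros q1 q2 vc')
  moreover have "L * norm (v t) * norm ((v t + v t) - 2 *\<^sub>R v t) - inner (ep t *\<^sub>R v t + ep' *\<^sub>R z t) (v t + v t)
     = - 2 * ep t * (norm (v t))\<^sup>2 - 2 * ep' * inner (z t) (v t)"
    by (simp add: scaleR_2 inner_add_left inner_add_right power2_norm_eq_inner inner_commute algebra_simps)
  ultimately have lim\<psi>: "(\<psi> \<longlongrightarrow> - 2 * ep t * (norm (v t))\<^sup>2 - 2 * ep' * inner (z t) (v t)) (at_right 0)"
    unfolding \<psi>_def by simp
  have "eventually (\<lambda>h. (norm (v (t+h)))\<^sup>2 - (norm (v t))\<^sup>2 \<le> h * \<psi> h) (at_right 0)"
    using zball eventually_at_right_real[OF c(1)]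
  proof eventually_elim
    case (elim h)
    then have h: "0 < h" "h < c" "z (t+h) \<in> ball (z t) \<delta>" by auto
    have S1: "t + h \<in> S" "t \<in> S" using h c by auto
    define dz where "dz = z (t+h) - z t"
    define dT where "dT = T (z (t+h)) - T (z t)"
    define de where "de = ep (t+h) *\<^sub>R z (t+h) - ep t *\<^sub>R z t"
    have vdiff: "v (t+h) - v t = - dT - de"
      unfolding dT_def de_def vdef[OF S1(1)] vdef[OF S1(2)] by (simp add: algebra_simps)
    have "(norm (v (t+h)))\<^sup>2 - (norm (v t))\<^sup>2 = inner (v (t+h) - v t) (W h)"
      unfolding W_def by (simp add: power2_norm_eq_inner inner_add_right inner_diff_left inner_diff_right inner_commute)
    also have "\<dots> = - inner dT (W h) - inner de (W h)"
      by (simp add: vdiff inner_diff_left)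
    also have "- inner dT (W h) = - inner dT (W h - 2 *\<^sub>R (dz /\<^sub>R h)) - (2 / h) * inner dT dz"
      by (simp add: inner_diff_right divide_inverse)
    finally have eq: "(norm (v (t+h)))\<^sup>2 - (norm (v t))\<^sup>2 =
        - inner dT (W h - 2 *\<^sub>R (dz /\<^sub>R h)) - (2 / h) * inner dT dz - inner de (W h)" .
    have m: "inner dT dz \<ge> 0" unfolding dT_def dz_def by (rule mono)
    have "(2 / h) * inner dT dz \<ge> 0" using m h by simp
    moreover have "- inner dT (W h - 2 *\<^sub>R (dz /\<^sub>R h)) \<le> norm dT * norm (W h - 2 *\<^sub>R (dz /\<^sub>R h))"
      using norm_cauchy_schwarz[of "-dT" "W h - 2 *\<^sub>R (dz /\<^sub>R h)"] by simp
    moreover have "norm dT \<le> L * norm dz"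
      unfolding dT_def dz_def using lip[OF h(3)] dpos by simp
    moreover have "norm dz = h * norm (dz /\<^sub>R h)" using h by simp
    ultimately have "- inner dT (W h - 2 *\<^sub>R (dz /\<^sub>R h)) \<le> h * (L * norm (dz /\<^sub>R h) * norm (W h - 2 *\<^sub>R (dz /\<^sub>R h)))"
      by (smt (verit, ccfv_SIG) mult.assoc mult.left_commute mult_right_mono norm_ge_zero)
    moreover have "inner de (W h) = h * inner (de /\<^sub>R h) (W h)" using h by simp
    moreover have "h * \<psi> h = h * (L * norm (dz /\<^sub>R h) * norm (W h - 2 *\<^sub>R (dz /\<^sub>R h))) - h * inner (de /\<^sub>R h) (W h)"
      unfolding \<psi>_def dz_def de_def by (simp only: right_diff_distrib)
    ultimately show ?case unfolding eq using \<open>(2 / h) * inner dT dz \<ge> 0\<close> by linarith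
  qed
  then show ?thesis unfolding updini_def using lim\<psi> by (intro exI[of _ \<psi>]) simp
qed

lemma nsq_deriv:
  fixes f :: "real \<Rightarrow> 'a::real_inner"
  assumes "(f has_vector_derivative f') (at t within S)"
  shows "((\<lambda>s. (norm (f s))\<^sup>2) has_real_derivative 2 * inner (f t) f') (at t within S)"
proof -
  have d: "(f has_derivative (\<lambda>h. h *\<^sub>R f')) (at t within S)" using assms by (simp add: has_vector_derivative_def)
  have "((\<lambda>s. inner (f s) (f s)) has_derivative (\<lambda>h. inner (f t) (h *\<^sub>R f') + inner (h *\<^sub>R f') (f t))) (at t within S)"
    by (rule has_derivative_inner[OF d d])
  then have "((\<lambda>s. inner (f s) (f s)) has_derivative (*) (2 * inner (f t) f')) (at t within S)"
    by (rule has_derivative_eq_rhs) (auto simp: inner_commute algebra_simps)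
  then show ?thesis unfolding has_field_derivative_def power2_norm_eq_inner .
qed

theorem corollary4p4:
  fixes f :: "'x::{real_inner,complete_space} \<Rightarrow> real"
    and gradf :: "'x \<Rightarrow> 'x"
    and A :: "'x \<Rightarrow> 'y::{real_inner,complete_space}"
    and Astar :: "'y \<Rightarrow> 'x"
    and b :: 'y
    and eps eps' eps'' :: "real \<Rightarrow> real"
    and t0 tp \<alpha> :: real
    and x :: "real \<Rightarrow> 'x" and lam :: "real \<Rightarrow> 'y"
    and xb :: 'x and lb :: 'y
  assumes f_convex: "convex_on UNIV f"
    and f_grad: "\<And>u. (f has_derivative (\<lambda>h. inner (gradf u) h)) (at u)"
    and gradf_cont: "continuous_on UNIV gradf"
    and gradf_lip: "\<And>B. bounded B \<Longrightarrow> \<exists>L. \<forall>u\<in>B. \<forall>v\<in>B. norm (gradf u - gradf v) \<le> L * norm (u - v)"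
    and A_lin: "bounded_linear A"
    and A_adj: "\<And>u v. inner (Astar v) u = inner v (A u)"
    and t0_nonneg: "t0 \<ge> 0"
    and eps_pos: "\<And>t. t \<ge> t0 \<Longrightarrow> eps t > 0"
    and eps_d1: "\<And>t. t \<ge> t0 \<Longrightarrow> (eps has_real_derivative eps' t) (at t within {t0..})"
    and eps_d2: "\<And>t. t \<ge> t0 \<Longrightarrow> (eps' has_real_derivative eps'' t) (at t within {t0..})"
    and eps''_cont: "continuous_on {t0..} eps''"
    and eps_lim: "(eps \<longlongrightarrow> 0) at_top"
    and SM_nonempty: "opt_set f A b \<times> mult_set f gradf A Astar b \<noteq> {}"
    and sol_x: "\<And>t. t \<ge> t0 \<Longrightarrow>
        (x has_vector_derivative (- (gradf (x t) + Astar (lam t) + eps t *\<^sub>R x t))) (at t within {t0..})"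
    and sol_lam: "\<And>t. t \<ge> t0 \<Longrightarrow>
        (lam has_vector_derivative (- (b - A (x t) + eps t *\<^sub>R lam t))) (at t within {t0..})"
    and tp: "tp \<ge> t0"
    and cond1: "\<And>t. t \<ge> tp \<Longrightarrow> (eps t)\<^sup>2 + eps' t \<ge> 0"
    and cond2: "\<And>t. t \<ge> tp \<Longrightarrow> 2 * eps t * eps' t + eps'' t \<le> 0"
    and alpha_pos: "\<alpha> > 0"
    and T_cond: "\<And>z w. (norm (Top gradf A Astar b z - Top gradf A Astar b w))\<^sup>2 \<ge> \<alpha> * (norm (z - w))\<^sup>2"
    and saddle: "xb \<in> opt_set f A b" "lb \<in> mult_set f gradf A Astar b"
  shows "(\<lambda>t. (norm ((x t, lam t) - (xb, lb)))\<^sup>2)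
           \<in> O[at_top](\<lambda>t. exp (- 2 * integral {t0..t} eps) + (eps t)\<^sup>2)"
proof -
  define T where "T = Top gradf A Astar b"
  define z where "z t = (x t, lam t)" for t
  define v where "v t = - (T (z t) + eps t *\<^sub>R z t)" for t
  define zb where "zb = (xb, lb)"
  define \<rho> where "\<rho> t = integral {t0..t} eps" for t
  have Tdef: "T p = (gradf (fst p) + Astar (snd p), b - A (fst p))" for p
    by (simp add: T_def Top_def)
  obtain KS where KS: "KS > 0" "\<And>v w. norm (Astar v - Astar w) \<le> KS * norm (v - w)"
    using adj_lip[OF A_lin A_adj] by blast
  obtain KA where KA: "KA > 0" "\<And>u. norm (A u) \<le> norm u * KA"
    using bounded_linear.pos_bounded[OF A_lin] by blast
  have Adiff: "A u - A w = A (u - w)" for u w using A_lin by (simp add: linear_diff bounded_linear.linear)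
  have zd: "(z has_vector_derivative v t) (at t within {t0..})" if "t \<ge> t0" for t
  proof -
    have "(z has_vector_derivative (- (gradf (x t) + Astar (lam t) + eps t *\<^sub>R x t), - (b - A (x t) + eps t *\<^sub>R lam t))) (at t within {t0..})"
      unfolding z_def by (intro has_vector_derivative_Pair sol_x sol_lam that)
    moreover have "v t = (- (gradf (x t) + Astar (lam t) + eps t *\<^sub>R x t), - (b - A (x t) + eps t *\<^sub>R lam t))"
      by (simp add: v_def Tdef z_def)
    ultimately show ?thesis by simp
  qed
  have mono: "inner (T p - T q) (p - q) \<ge> 0" for p q
  proof -
    obtain p1 p2 where p: "p = (p1, p2)" by (cases p)
    obtain q1 q2 where q: "q = (q1, q2)" by (cases q)
    have g: "inner (gradf p1 - gradf q1) (p1 - q1) \<ge> 0" by (rule convex_grad_mono[OF f_convex f_grad])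
    have "inner (Astar p2 - Astar q2) (p1 - q1) = inner (p2 - q2) (A p1 - A q1)"
      by (simp add: inner_diff_left inner_diff_right A_adj Adiff[symmetric])
    moreover have "inner (T p - T q) (p - q) = inner (gradf p1 - gradf q1) (p1 - q1) + inner (Astar p2 - Astar q2) (p1 - q1)
        - inner (A p1 - A q1) (p2 - q2)"
      by (simp add: p q Tdef inner_diff_left inner_diff_right inner_add_left algebra_simps)
    ultimately show ?thesis using g by (simp add: inner_commute)
  qed
  have lip: "\<exists>L. \<forall>p\<in>ball p0 1. \<forall>q\<in>ball p0 1. norm (T p - T q) \<le> L * norm (p - q)" for p0
  proof -
    obtain L1 where L1: "\<forall>u\<in>ball (fst p0) 1. \<forall>w\<in>ball (fst p0) 1. norm (gradf u - gradf w) \<le> L1 * norm (u - w)"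
      using gradf_lip[of "ball (fst p0) 1"] by auto
    have "norm (T p - T q) \<le> (\<bar>L1\<bar> + KS + KA) * norm (p - q)" if "p \<in> ball p0 1" "q \<in> ball p0 1" for p q
    proof -
      obtain p1 p2 where p: "p = (p1, p2)" by (cases p)
      obtain q1 q2 where q: "q = (q1, q2)" by (cases q)
      obtain a1 a2 where a: "p0 = (a1, a2)" by (cases p0)
      have n1: "norm (p1 - q1) \<le> norm (p - q)" "norm (p2 - q2) \<le> norm (p - q)"
        using norm_fst_le[of "p1 - q1" "p2 - q2"] norm_snd_le[of "p2 - q2" "p1 - q1"] by (auto simp: p q)
      have "dist a1 p1 \<le> dist p0 p" "dist a1 q1 \<le> dist p0 q"
        using norm_fst_le[of "a1 - p1" "a2 - p2"] norm_fst_le[of "a1 - q1" "a2 - q2"]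
        by (auto simp: p q a dist_norm)
      then have inb: "p1 \<in> ball (fst p0) 1" "q1 \<in> ball (fst p0) 1" using that by (auto simp: a)
      have "norm (gradf p1 - gradf q1) \<le> L1 * norm (p1 - q1)" using L1 inb by blast
      also have "\<dots> \<le> \<bar>L1\<bar> * norm (p - q)" using n1 by (smt (verit) abs_ge_self mult_mono norm_ge_zero abs_ge_zero mult_right_mono)
      finally have g: "norm (gradf p1 - gradf q1) \<le> \<bar>L1\<bar> * norm (p - q)" .
      have s: "norm (Astar p2 - Astar q2) \<le> KS * norm (p - q)"
        using KS(2)[of p2 q2] n1 KS(1) by (smt (verit) mult_left_mono)
      have aa: "norm (A q1 - A p1) \<le> KA * norm (p - q)"
        using KA(2)[of "q1 - p1"] n1 KA(1) Adiff[of q1 p1] norm_minus_commute[of q1 p1]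
        by (smt (verit) mult.commute mult_left_mono)
      have "T p - T q = (gradf p1 - gradf q1 + (Astar p2 - Astar q2), A q1 - A p1)"
        by (simp add: p q Tdef algebra_simps)
      then have "norm (T p - T q) \<le> norm (gradf p1 - gradf q1 + (Astar p2 - Astar q2)) + norm (A q1 - A p1)"
        using norm_Pair_le by metis
      also have "\<dots> \<le> norm (gradf p1 - gradf q1) + norm (Astar p2 - Astar q2) + norm (A q1 - A p1)"
        using norm_triangle_ineq by simp
      finally show ?thesis using g s aa by (simp add: algebra_simps)
    qed
    then show ?thesis by blast
  qed
  have Tzb: "T zb = 0"
  proof -
    obtain xb' where xb': "xb' \<in> opt_set f A b" "gradf xb' + Astar lb = 0"
      using saddle(2) unfolding mult_set_def by auto
    have Axb: "A xb = b" "A xb' = b" using saddle(1) xb'(1) by (auto simp: opt_set_def)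
    have "f xb \<le> f xb'" "f xb' \<le> f xb" using saddle(1) xb'(1) Axb by (auto simp: opt_set_def)
    then have fe: "f xb = f xb'" by simp
    define Lg where "Lg u = f u + inner lb (A u - b)" for u
    have "(Lg has_derivative (\<lambda>h. inner (gradf xb + Astar lb) h)) (at xb)"
    proof -
      have "(Lg has_derivative (\<lambda>h. inner (gradf xb) h + inner lb (A h - 0))) (at xb)"
        unfolding Lg_def
        by (intro has_derivative_add f_grad has_derivative_inner_right has_derivative_diff
             bounded_linear.has_derivative[OF A_lin] has_derivative_ident has_derivative_const)
      then show ?thesis by (rule has_derivative_eq_rhs) (auto simp: inner_add_left A_adj)
    qed
    moreover have "eventually (\<lambda>u. Lg xb \<le> Lg u) (at xb)"
    proof (rule always_eventually, rule allI)
      fix u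
      have "f xb' + inner (gradf xb') (u - xb') \<le> f u" by (rule convex_tangent[OF f_convex f_grad])
      moreover have "inner (gradf xb') (u - xb') = - inner lb (A u - b)"
      proof -
        have "gradf xb' = - Astar lb" using xb'(2) by (simp add: eq_neg_iff_add_eq_0)
        then show ?thesis by (simp add: A_adj Adiff[symmetric] Axb)
      qed
      ultimately show "Lg xb \<le> Lg u" unfolding Lg_def using fe Axb by simp
    qed
    ultimately have "(\<lambda>h. inner (gradf xb + Astar lb) h) = (\<lambda>h. 0)" by (rule has_derivative_local_min)
    then have "inner (gradf xb + Astar lb) (gradf xb + Astar lb) = 0" by meson
    then have "gradf xb + Astar lb = 0" by simp
    then show ?thesis by (simp add: zb_def Tdef Axb zero_prod_def)
  qed
  have Ascont: "continuous_on UNIV Astar"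
    by (rule lipschitz_on_continuous_on[of KS]) (use KS in \<open>auto simp: lipschitz_on_def dist_norm\<close>)
  have Tcont: "continuous_on UNIV T"
  proof -
    have "continuous_on UNIV (\<lambda>p. (gradf (fst p) + Astar (snd p), b - A (fst p)))"
      by (intro continuous_intros continuous_on_compose2[OF gradf_cont] continuous_on_compose2[OF Ascont]
          bounded_linear.continuous_on[OF A_lin]) auto
    then show ?thesis using Tdef by presburger
  qed
  have zcont: "continuous_on {t0..} z"
    using zd by (auto simp: continuous_on_eq_continuous_within intro: has_vector_derivative_continuous)
  have epscont: "continuous_on {t0..} eps"
    using eps_d1 by (auto simp: continuous_on_eq_continuous_within intro: DERIV_continuous)
  have eps'cont: "continuous_on {t0..} eps'"
    using eps_d2 by (auto simp: continuous_on_eq_continuous_within intro: DERIV_continuous)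
  have vcont: "continuous_on {t0..} v"
    unfolding v_def
    by (intro continuous_intros continuous_on_compose2[OF Tcont zcont] zcont epscont) auto
  have \<rho>d: "(\<rho> has_real_derivative eps t) (at t within {t0..s})" if "t0 \<le> t" "t \<le> s" for t s
    unfolding \<rho>_def by (rule integral_has_real_derivative) (use that continuous_on_subset[OF epscont] in auto)
  have \<rho>cont: "continuous_on {t0..s} \<rho>" for s
    using \<rho>d[of _ s] by (auto simp: continuous_on_eq_continuous_within intro!: DERIV_continuous)
  have \<rho>0: "\<rho> t0 = 0" by (simp add: \<rho>_def)
  have \<rho>nn: "\<rho> t \<ge> 0" if "t \<ge> t0" for t
    unfolding \<rho>_def
  proof (rule integral_nonneg)
    show "eps integrable_on {t0..t}" by (rule integrable_continuous_real, rule continuous_on_subset[OF epscont]) auto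
    show "0 \<le> eps s" if "s \<in> {t0..t}" for s using eps_pos[of s] that by auto
  qed
  define r where "r t = (norm (z t - zb))\<^sup>2" for t
  define c where "c = (norm zb)\<^sup>2"
  have rd: "(r has_real_derivative 2 * inner (z t - zb) (v t)) (at t within {t0..})" if "t \<ge> t0" for t
  proof -
    have "((\<lambda>s. z s - zb) has_vector_derivative v t - 0) (at t within {t0..})"
      by (intro has_vector_derivative_diff zd that has_vector_derivative_const)
    from nsq_deriv[OF this] show ?thesis by (simp add: r_def[abs_def])
  qed
  have key1: "2 * inner (z t - zb) (v t) \<le> - eps t * (r t - c)" if "t \<ge> t0" for t
  proof -
    have "inner (z t - zb) (v t) = - inner (T (z t) - T zb) (z t - zb) - eps t * inner (z t - zb) (z t)"
      by (simp add: v_def Tzb inner_diff_right inner_commute)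
    moreover have "inner (T (z t) - T zb) (z t - zb) \<ge> 0" by (rule mono)
    moreover have "2 * inner (z t - zb) (z t) = r t + (norm (z t))\<^sup>2 - c"
      by (simp add: r_def c_def power2_norm_eq_inner inner_diff_left inner_diff_right inner_commute)
    moreover have "eps t > 0" using eps_pos that by auto
    ultimately have "2 * inner (z t - zb) (v t) \<le> - eps t * (r t + (norm (z t))\<^sup>2 - c)"
    proof -
      assume a: "inner (z t - zb) (v t) = - inner (T (z t) - T zb) (z t - zb) - eps t * inner (z t - zb) (z t)"
        "inner (T (z t) - T zb) (z t - zb) \<ge> 0" "2 * inner (z t - zb) (z t) = r t + (norm (z t))\<^sup>2 - c"
      have "- eps t * (r t + (norm (z t))\<^sup>2 - c) = - 2 * (eps t * inner (z t - zb) (z t))"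
        unfolding a(3)[symmetric] by simp
      then show ?thesis using a(1,2) by linarith
    qed
    moreover have "eps t * (r t - c) \<le> eps t * (r t + (norm (z t))\<^sup>2 - c)"
      using \<open>eps t > 0\<close> by (intro mult_left_mono) auto
    ultimately show ?thesis by simp
  qed
  have rbound: "r s \<le> c + \<bar>r t0 - c\<bar>" if "s \<ge> t0" for s
  proof -
    define \<Psi> where "\<Psi> t = exp (\<rho> t) * (r t - c)" for t
    have "\<Psi> s \<le> \<Psi> t0"
    proof (rule dini_decreasing[OF that])
      have "continuous_on {t0..s} r"
        unfolding r_def by (intro continuous_intros continuous_on_subset[OF zcont]) auto
      then show "continuous_on {t0..s} \<Psi>"
        unfolding \<Psi>_def by (intro continuous_intros \<rho>cont)
    next
      fix t assume t: "t \<in> {t0..<s}"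
      have ed: "((\<lambda>u. exp (\<rho> u)) has_real_derivative exp (\<rho> t) * eps t) (at t within {t0..s})"
        using \<rho>d[of t s] t by (auto intro!: derivative_eq_intros)
      have gd: "((\<lambda>u. r u - c) has_real_derivative 2 * inner (z t - zb) (v t) - 0) (at t within {t0..})"
        using rd[of t] t by (auto intro!: derivative_eq_intros)
      have ug: "updini (\<lambda>u. r u - c) t (2 * inner (z t - zb) (v t) - 0)"
        by (rule updini_deriv[OF gd, of 1]) (use t in auto)
      have "updini \<Psi> t (exp (\<rho> t) * (2 * inner (z t - zb) (v t) - 0) + exp (\<rho> t) * eps t * (r t - c))"
        unfolding \<Psi>_def by (rule updini_mult[OF ug ed, of "s - t"]) (use t in auto)
      moreover have "exp (\<rho> t) * (2 * inner (z t - zb) (v t) - 0) + exp (\<rho> t) * eps t * (r t - c) \<le> 0"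
      proof -
        have "exp (\<rho> t) * (2 * inner (z t - zb) (v t)) \<le> exp (\<rho> t) * (- eps t * (r t - c))"
          using key1[of t] t by (intro mult_left_mono) auto
        then show ?thesis by (simp add: algebra_simps)
      qed
      ultimately show "\<exists>D\<le>0. updini \<Psi> t D" by blast
    qed
    then have "exp (\<rho> s) * (r s - c) \<le> r t0 - c" by (simp add: \<Psi>_def \<rho>0)
    moreover have "exp (\<rho> s) \<ge> 1" using \<rho>nn[OF that] by simp
    ultimately show ?thesis
    proof (cases "r s - c \<le> 0")
      case False
      assume h: "exp (\<rho> s) * (r s - c) \<le> r t0 - c" "exp (\<rho> s) \<ge> 1"
      have "r s - c \<le> exp (\<rho> s) * (r s - c)" using mult_right_mono[of 1 "exp (\<rho> s)" "r s - c"] False h(2) by simp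
      then show ?thesis using h(1) abs_ge_self[of "r t0 - c"] by linarith
    qed simp
  qed
  define B where "B = 2 * c + 2 * (c + \<bar>r t0 - c\<bar>)"
  have zbound: "(norm (z s))\<^sup>2 \<le> B" if "s \<ge> t0" for s
  proof -
    have "norm (z s) \<le> norm (z s - zb) + norm zb" using norm_triangle_sub[of "z s" zb] by simp
    then have "(norm (z s))\<^sup>2 \<le> (norm (z s - zb) + norm zb)\<^sup>2" by (simp add: power_mono)
    also have "\<dots> \<le> 2 * (norm (z s - zb))\<^sup>2 + 2 * (norm zb)\<^sup>2"
    proof -
      have "0 \<le> (norm (z s - zb) - norm zb)\<^sup>2" by simp
      then show ?thesis by (simp add: power2_eq_square algebra_simps)
    qed
    finally show ?thesis using rbound[OF that] unfolding B_def r_def c_def by simp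
  qed
  \<comment> \<open>Lyapunov function for the velocity\<close>
  define G where "G t = (norm (v t))\<^sup>2 + eps' t * (norm (z t))\<^sup>2" for t
  define \<Phi> where "\<Phi> t = exp (2 * \<rho> t) * G t" for t
  have \<Phi>dec: "\<Phi> s \<le> \<Phi> tp" if "s \<ge> tp" for s
  proof (rule dini_decreasing[OF that])
    have sub: "{tp..s} \<subseteq> {t0..}" "{tp..s} \<subseteq> {t0..s}" using tp by auto
    show "continuous_on {tp..s} \<Phi>"
      unfolding \<Phi>_def G_def
      by (intro continuous_intros continuous_on_subset[OF \<rho>cont sub(2)] continuous_on_subset[OF vcont sub(1)]
          continuous_on_subset[OF zcont sub(1)] continuous_on_subset[OF eps'cont sub(1)])
  next
    fix t assume t: "t \<in> {tp..<s}"
    then have tt0: "t \<ge> t0" using tp by auto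
    obtain L where L: "\<forall>p\<in>ball (z t) 1. \<forall>q\<in>ball (z t) 1. norm (T p - T q) \<le> L * norm (p - q)"
      using lip by blast
    have vc: "continuous (at t within {t0..}) v"
      using vcont tt0 by (simp add: continuous_on_eq_continuous_within)
    have U1: "updini (\<lambda>s. (norm (v s))\<^sup>2) t (- 2 * eps t * (norm (v t))\<^sup>2 - 2 * eps' t * inner (z t) (v t))"
    proof -
      have vdef': "\<And>s. s \<in> {t0..} \<Longrightarrow> v s = - (T (z s) + eps s *\<^sub>R z s)" by (simp add: v_def)
      have Lp: "\<And>p q. p \<in> ball (z t) 1 \<Longrightarrow> q \<in> ball (z t) 1 \<Longrightarrow> norm (T p - T q) \<le> L * norm (p - q)"
        using L by blast
      have sub1: "{t..t+1} \<subseteq> {t0..}" using tt0 by auto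
      show ?thesis by (rule key_dini[OF mono Lp zero_less_one zd[OF tt0] zero_less_one sub1 vdef' eps_d1[OF tt0] vc])
    qed
    have "((\<lambda>s. eps' s * (norm (z s))\<^sup>2) has_real_derivative eps' t * (2 * inner (z t) (v t)) + eps'' t * (norm (z t))\<^sup>2) (at t within {t0..})"
      by (rule DERIV_mult'[OF eps_d2[OF tt0] nsq_deriv[OF zd[OF tt0]]])
    then have U2: "updini (\<lambda>s. eps' s * (norm (z s))\<^sup>2) t (eps' t * (2 * inner (z t) (v t)) + eps'' t * (norm (z t))\<^sup>2)"
      by (rule updini_deriv[of _ _ _ _ 1]) (use tt0 in auto)
    have UG: "updini G t ((- 2 * eps t * (norm (v t))\<^sup>2 - 2 * eps' t * inner (z t) (v t)) + (eps' t * (2 * inner (z t) (v t)) + eps'' t * (norm (z t))\<^sup>2))"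
      unfolding G_def[abs_def] by (rule updini_add[OF U1 U2])
    have ed: "((\<lambda>u. exp (2 * \<rho> u)) has_real_derivative exp (2 * \<rho> t) * (2 * eps t)) (at t within {t0..s})"
      using \<rho>d[of t s] t tt0 by (auto intro!: derivative_eq_intros)
    have "updini \<Phi> t (exp (2 * \<rho> t) * ((- 2 * eps t * (norm (v t))\<^sup>2 - 2 * eps' t * inner (z t) (v t)) + (eps' t * (2 * inner (z t) (v t)) + eps'' t * (norm (z t))\<^sup>2))
        + exp (2 * \<rho> t) * (2 * eps t) * G t)"
      unfolding \<Phi>_def by (rule updini_mult[OF UG ed, of "s - t"]) (use t tt0 in auto)
    moreover have "exp (2 * \<rho> t) * ((- 2 * eps t * (norm (v t))\<^sup>2 - 2 * eps' t * inner (z t) (v t)) + (eps' t * (2 * inner (z t) (v t)) + eps'' t * (norm (z t))\<^sup>2))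
        + exp (2 * \<rho> t) * (2 * eps t) * G t = exp (2 * \<rho> t) * ((2 * eps t * eps' t + eps'' t) * (norm (z t))\<^sup>2)"
      by (simp add: G_def algebra_simps)
    moreover have "exp (2 * \<rho> t) * ((2 * eps t * eps' t + eps'' t) * (norm (z t))\<^sup>2) \<le> 0"
      using cond2[of t] t by (intro mult_nonneg_nonpos mult_nonpos_nonneg) auto
    ultimately show "\<exists>D\<le>0. updini \<Phi> t D" by auto
  qed
  define C0 where "C0 = \<bar>\<Phi> tp\<bar>"
  have vbound: "(norm (v t))\<^sup>2 \<le> C0 * exp (- 2 * \<rho> t) + (eps t)\<^sup>2 * B" if "t \<ge> tp" for t
  proof -
    have tt0: "t \<ge> t0" using that tp by auto
    have "exp (2 * \<rho> t) * G t \<le> C0" using \<Phi>dec[OF that] by (simp add: \<Phi>_def C0_def)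
    then have "G t \<le> C0 * exp (- 2 * \<rho> t)"
      by (simp add: exp_minus field_simps)
    moreover have "- eps' t * (norm (z t))\<^sup>2 \<le> (eps t)\<^sup>2 * B"
    proof -
      have "- eps' t \<le> (eps t)\<^sup>2" using cond1[OF that] by simp
      then have "- eps' t * (norm (z t))\<^sup>2 \<le> (eps t)\<^sup>2 * (norm (z t))\<^sup>2" by (intro mult_right_mono) auto
      also have "\<dots> \<le> (eps t)\<^sup>2 * B" using zbound[OF tt0] by (intro mult_left_mono) auto
      finally show ?thesis .
    qed
    ultimately show ?thesis unfolding G_def by simp
  qed
  have final: "(norm (z t - zb))\<^sup>2 \<le> ((2 * C0 + 4 * B) / \<alpha>) * (exp (- 2 * \<rho> t) + (eps t)\<^sup>2)" if "t \<ge> tp" for t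
  proof -
    have tt0: "t \<ge> t0" using that tp by auto
    have "T (z t) - T zb = - (v t + eps t *\<^sub>R z t)" by (simp add: v_def Tzb)
    then have "(norm (T (z t) - T zb))\<^sup>2 = (norm (v t + eps t *\<^sub>R z t))\<^sup>2" by (simp only: norm_minus_cancel)
    also have "\<dots> \<le> (norm (v t) + \<bar>eps t\<bar> * norm (z t))\<^sup>2"
      using norm_triangle_ineq[of "v t" "eps t *\<^sub>R z t"] by (intro power_mono) auto
    also have "\<dots> \<le> 2 * (norm (v t))\<^sup>2 + 2 * ((eps t)\<^sup>2 * (norm (z t))\<^sup>2)"
    proof -
      have "0 \<le> (norm (v t) - \<bar>eps t\<bar> * norm (z t))\<^sup>2" by simp
      then show ?thesis by (simp add: power2_eq_square algebra_simps)
    qed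
    also have "\<dots> \<le> 2 * (C0 * exp (- 2 * \<rho> t) + (eps t)\<^sup>2 * B) + 2 * ((eps t)\<^sup>2 * B)"
      using vbound[OF that] mult_left_mono[OF zbound[OF tt0] zero_le_power2[of "eps t"]]
      by (intro add_mono) simp_all
    also have "\<dots> \<le> (2 * C0 + 4 * B) * (exp (- 2 * \<rho> t) + (eps t)\<^sup>2)"
    proof -
      have "C0 \<ge> 0" "B \<ge> 0" using zbound[OF tt0] by (auto simp: C0_def intro: order_trans[OF zero_le_power2])
      then have "4 * B * exp (- 2 * \<rho> t) \<ge> 0" "2 * C0 * (eps t)\<^sup>2 \<ge> 0" by auto
      then show ?thesis by (simp add: algebra_simps)
    qed
    finally have "\<alpha> * (norm (z t - zb))\<^sup>2 \<le> (2 * C0 + 4 * B) * (exp (- 2 * \<rho> t) + (eps t)\<^sup>2)"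
      using T_cond[of "z t" zb] unfolding T_def by linarith
    then show ?thesis using alpha_pos by (simp add: field_simps)
  qed
  show ?thesis
  proof (rule bigoI[where c = "(2 * C0 + 4 * B) / \<alpha>"])
    show "\<forall>\<^sub>F t in at_top. norm ((norm ((x t, lam t) - (xb, lb)))\<^sup>2) \<le> (2 * C0 + 4 * B) / \<alpha> * norm (exp (- 2 * integral {t0..t} eps) + (eps t)\<^sup>2)"
      using eventually_ge_at_top[of tp]
    proof eventually_elim
      case (elim t)
      have "0 \<le> exp (- 2 * integral {t0..t} eps) + (eps t)\<^sup>2" by (intro add_nonneg_nonneg) auto
      then show ?case using final[OF elim] by (simp add: z_def zb_def \<rho>_def)
    qed
  qed
qed

end
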